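(* Let $(X,\|\cdot\|)$ be a Banach space, let $C$ be a closed subspace of $X$, and let $T:C\to C$ be a mapping. Assume there exist two altering distance functions $\phi,\psi:[0,\infty)\to[0,\infty)$ such that for all $x,y\in C$: (i) $\phi(\|Tx-Ty\|)\le\phi(\|x-y\|)-\psi(\|x-y\|)$; (ii) $\phi(\|Tx-y\|)\le\phi(\|x-y\|)-\psi(\|x-y\|)$. Then the null vector $\theta$ of $X$ is the only fixed point of $T$.
   Context: A function $\varphi:[0,\infty)\to[0,\infty)$ is called an altering distance function if (i) $\varphi$ is monotone increasing and continuous, and (ii) $\varphi(t)=0$ if and only if $t=0$. *)

theory Defs
  imports "HOL-Analysis.Analysis"
begin

definition altering_distance :: "(real \<Rightarrow> real) \<Rightarrow> bool" where
  "altering_distance \<phi> \<longleftrightarrow>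
     (\<forall>t\<ge>0. \<phi> t \<ge> 0) \<and>
     mono_on {0..} \<phi> \<and>
     continuous_on {0..} \<phi> \<and>
     (\<forall>t\<ge>0. \<phi> t = 0 \<longleftrightarrow> t = 0)"

end

theory Submission
  imports Defs
begin

theorem theorem2p3:
  fixes C :: "'a::banach set" and T :: "'a \<Rightarrow> 'a"
    and \<phi> \<psi> :: "real \<Rightarrow> real"
  assumes "subspace C" and "closed C"
    and "\<forall>x\<in>C. T x \<in> C"
    and "altering_distance \<phi>" and "altering_distance \<psi>"
    and "\<forall>x\<in>C. \<forall>y\<in>C. \<phi> (norm (T x - T y)) \<le> \<phi> (norm (x - y)) - \<psi> (norm (x - y))"
    and "\<forall>x\<in>C. \<forall>y\<in>C. \<phi> (norm (T x - y)) \<le> \<phi> (norm (x - y)) - \<psi> (norm (x - y))"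
  shows "{x \<in> C. T x = x} = {0}"
proof -
  have p: "\<And>t. t \<ge> 0 \<Longrightarrow> \<phi> t \<ge> 0" "\<phi> 0 = 0" "\<And>t. t \<ge> 0 \<Longrightarrow> \<psi> t = 0 \<longleftrightarrow> t = 0"
    "\<And>t. t \<ge> 0 \<Longrightarrow> \<psi> t \<ge> 0" "\<psi> 0 = 0" "\<And>t. t \<ge> 0 \<Longrightarrow> \<phi> t = 0 \<longleftrightarrow> t = 0"
    using assms(4,5) unfolding altering_distance_def by auto
  have z: "0 \<in> C" using assms(1) subspace_0 by blast
  have fx: "T x = x" if "x \<in> C" for x
  proof -
    have "\<phi> (norm (T x - x)) \<le> 0" using assms(7) that p(2,5) by fastforce
    hence "\<phi> (norm (T x - x)) = 0" using p(1)[of "norm (T x - x)"] by simp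
    thus ?thesis using p(6)[of "norm (T x - x)"] by simp
  qed
  have zero: "x = 0" if "x \<in> C" for x
  proof -
    have "\<phi> (norm (T x - 0)) \<le> \<phi> (norm (x - 0)) - \<psi> (norm (x - 0))" using assms(7) that z by blast
    hence "\<psi> (norm x) \<le> 0" using fx[OF that] by simp
    hence "\<psi> (norm x) = 0" using p(4)[of "norm x"] by simp
    thus ?thesis using p(3)[of "norm x"] by simp
  qed
  show ?thesis using z fx zero by auto
qed

end
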